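(* Let $p_1,p_2$ be distinct primes with $p_1\equiv p_2\equiv 1\pmod 4$ and let $\varepsilon_2=x+y\sqrt{p_1p_2}$ (with $x,y$ integers or half-integers) be the fundamental unit of $\mathbb{Q}(\sqrt{p_1p_2})$. If $\varepsilon_2$ has norm $1$, then neither $x+1$ nor $x-1$ is a square in $\mathbb{N}$. *)

theory Defs
  imports Complex_Main "HOL-Computational_Algebra.Primes"
begin

text \<open>For a squarefree d with d = 1 (mod 4), the ring of integers of Q(sqrt d) consists of the
numbers (a + b sqrt d)/2 with a, b integers of the same parity.\<close>

definition qf_value :: "int \<Rightarrow> int \<Rightarrow> int \<Rightarrow> real" where
  "qf_value d a b = (real_of_int a + real_of_int b * sqrt (real_of_int d)) / 2"

definition qf_integral :: "int \<Rightarrow> int \<Rightarrow> bool" where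
  "qf_integral a b \<longleftrightarrow> a mod 2 = b mod 2"

definition qf_norm :: "int \<Rightarrow> int \<Rightarrow> int \<Rightarrow> rat" where
  "qf_norm d a b = of_int (a^2 - d * b^2) / 4"

definition qf_unit :: "int \<Rightarrow> int \<Rightarrow> int \<Rightarrow> bool" where
  "qf_unit d a b \<longleftrightarrow> qf_integral a b \<and> (qf_norm d a b = 1 \<or> qf_norm d a b = -1)"

definition fundamental_unit :: "int \<Rightarrow> int \<Rightarrow> int \<Rightarrow> bool" where
  "fundamental_unit d a b \<longleftrightarrow> qf_unit d a b \<and> qf_value d a b > 1 \<and>
     (\<forall>a' b'. qf_unit d a' b' \<and> qf_value d a' b' > 1 \<longrightarrow> qf_value d a b \<le> qf_value d a' b')"

end

theory Submission
  imports Defs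
begin

lemma descent:
  fixes d c y k :: int
  assumes "odd d" "odd c" "d * y^2 = 2 * k^2 * c"
  shows "y = 0"
  using assms
proof (induction "nat \<bar>y\<bar>" arbitrary: y k rule: less_induct)
  case less
  show ?case
  proof (rule ccontr)
    assume y0: "y \<noteq> 0"
    have "even (d * y^2)" using less.prems by simp
    hence "even y" using less.prems(1) by simp
    then obtain z where z: "y = 2 * z" by blast
    have e1: "2 * (d * z^2) = k^2 * c" using less.prems(3) z by (simp add: power2_eq_square algebra_simps)
    hence "even (k^2 * c)" by (metis dvd_triv_left)
    hence "even k" using less.prems(2) by simp
    then obtain j where j: "k = 2 * j" by blast
    have e2: "d * z^2 = 2 * j^2 * c" using e1 j by (simp add: power2_eq_square algebra_simps)
    have "nat \<bar>z\<bar> < nat \<bar>y\<bar>" using z y0 by auto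
    from less.hyps[OF this less.prems(1,2) e2] have "z = 0" .
    thus False using z y0 by simp
  qed
qed

lemma key:
  fixes d y n e :: int
  assumes "d mod 4 = 1" "e = 2 \<or> e = -2" "d * y^2 = n^2 * (n^2 + e)"
  shows "y = 0"
proof (cases "even n")
  case True
  then obtain k where k: "n = 2 * k" by blast
  define c where "c = 2 * k^2 + e div 2"
  have "odd c" using assms(2) unfolding c_def by auto
  have "d * y^2 = 2 * (2*k)^2 * c" using assms(2,3) k unfolding c_def
    by (auto simp: power2_eq_square algebra_simps)
  moreover have "odd d" using assms(1) by presburger
  ultimately show ?thesis using descent \<open>odd c\<close> by blast
next
  case False
  then obtain t where t: "n = 2 * t + 1" by (metis oddE)
  have rhs: "n^2 * (n^2 + e) mod 4 = 3"
  proof -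
    have "n^2 = 4 * (t^2 + t) + 1" using t by (simp add: power2_eq_square algebra_simps)
    define s where "s = t^2 + t"
    have N: "n^2 = 4 * s + 1" using \<open>n^2 = 4 * (t^2 + t) + 1\<close> s_def by simp
    have "n^2 * (n^2 + e) = 4 * (4*s^2 + 4*s) + 3 \<or> n^2 * (n^2 + e) = 4 * (4*s^2 - 1) + 3"
      using assms(2) unfolding N by (auto simp: power2_eq_square algebra_simps)
    moreover have "\<And>u::int. (4*u+3) mod 4 = 3" by presburger
    ultimately show ?thesis by metis
  qed
  show ?thesis
  proof (cases "even y")
    case True
    then obtain z where "y = 2 * z" by blast
    hence "d * y^2 = 4 * (d * z^2)" by (simp add: power2_eq_square)
    thus ?thesis using rhs assms(3) by simp
  next
    case False
    then obtain z where z: "y = 2 * z + 1" by (metis oddE)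
    obtain q where q: "d = 4 * q + 1" using assms(1) by (metis mod_div_mult_eq add.commute mult.commute)
    have "d * y^2 = 4 * (q * (2*z+1)^2 + z^2 + z) + 1" using z q by (simp add: power2_eq_square algebra_simps)
    moreover have "\<And>u::int. (4*u+1) mod 4 = 1" by presburger
    ultimately have "d * y^2 mod 4 = 1" by metis
    thus ?thesis using rhs assms(3) by simp
  qed
qed

theorem mainTheorem8:
  fixes p1 p2 a b :: int
  assumes "prime p1" and "prime p2" and "p1 \<noteq> p2"
    and "p1 mod 4 = 1" and "p2 mod 4 = 1"
    and "fundamental_unit (p1 * p2) a b"
    and "qf_norm (p1 * p2) a b = 1"
  shows "\<forall>n::nat. real_of_int a / 2 + 1 \<noteq> real n ^ 2 \<and> real_of_int a / 2 - 1 \<noteq> real n ^ 2"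
proof -
  define d where "d = p1 * p2"
  have d4: "d mod 4 = 1" unfolding d_def using assms(4,5) mod_mult_eq[of p1 4 p2] by simp
  have dpos: "d > 0" unfolding d_def using assms(1,2) by (simp add: prime_gt_0_int)
  have nrm: "a^2 - d * b^2 = 4"
  proof -
    have "(of_int (a^2 - d * b^2) :: rat) / 4 = 1" using assms(7) unfolding qf_norm_def d_def .
    hence "(of_int (a^2 - d * b^2) :: rat) = of_int 4" by simp
    thus ?thesis using of_int_eq_iff by blast
  qed
  have val: "qf_value d a b > 1" using assms(6) unfolding fundamental_unit_def d_def by simp
  have b0: "b \<noteq> 0"
  proof
    assume "b = 0"
    hence "a^2 = 2^2" using nrm by simp
    hence "a = 2 \<or> a = -2" using power2_eq_iff by blast
    thus False using val \<open>b = 0\<close> unfolding qf_value_def by auto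
  qed
  have odd_d: "odd d" using d4 by presburger
  have gen: False if e: "e = 2 \<or> e = -2" and an: "a = 2 * int n^2 - e" for e :: int and n :: nat
  proof -
    have "d * b^2 = a^2 - 4" using nrm by simp
    also have "\<dots> = (2 * int n^2 - e)^2 - 4" using an by simp
    also have "\<dots> = 4 * (int n^2 * (int n^2 - e))" using e by (auto simp: power2_eq_square algebra_simps)
    finally have eq: "d * b^2 = 4 * (int n^2 * (int n^2 - e))" .
    hence "even (d * b^2)" by simp
    hence "even b" using odd_d by simp
    then obtain y where y: "b = 2 * y" by blast
    have "d * y^2 = (int n)^2 * ((int n)^2 + (-e))" using eq y by (simp add: power2_eq_square algebra_simps)
    from key[OF d4 _ this] e have "y = 0" by auto
    thus False using y b0 by simp
  qed
  show ?thesis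
  proof (intro allI conjI notI)
    fix n :: nat
    assume "real_of_int a / 2 + 1 = real n ^ 2"
    hence "real_of_int a = real_of_int (2 * int n^2 - 2)" by (simp add: field_simps)
    hence "a = 2 * int n^2 - 2" using of_int_eq_iff by blast
    thus False using gen[of 2 n] by simp
  next
    fix n :: nat
    assume "real_of_int a / 2 - 1 = real n ^ 2"
    hence "real_of_int a = real_of_int (2 * int n^2 - (-2))" by (simp add: field_simps)
    hence "a = 2 * int n^2 - (-2)" using of_int_eq_iff by blast
    thus False using gen[of "-2" n] by simp
  qed
qed

end
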